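(* Let $j\ge1$ and $s\ge0$ be integers and let $g=g_{j,s,1}$ be the sequence defined in the context (case $\lambda=1$). Then $g$ is non-decreasing, $g(n)\equiv 1 \pmod j$ for all $n\ge1$, and its frequency function $\phi(q)=\#\{n\ge1: g(n)=q\}$ satisfies, for every positive integer $q$, \[ \phi(q)=\begin{cases} q+s, & q\equiv 1 \pmod j,\\ 0, & \text{otherwise.}\end{cases} \] Equivalently, $g$ is the sequence $1^{s+1},(j+1)^{s+j+1},(2j+1)^{s+2j+1},\dots$, where $a^{b}$ denotes the value $a$ repeated $b$ times.
   Context: Fix integers $j\ge1$, $\lambda\ge1$, $s\ge0$. Define a labeled infinite rooted tree $\mathcal K$ as follows. It has "supernodes" $S_0,S_1,S_2,\dots$ with an edge between $S_i$ and $S_{i+1}$ for every $i\ge0$ ($S_0$ is the root). $S_0$ has two further children: the "initial leaf" and a node $N_0$, which is a leaf. For each $i\ge1$, $S_i$ has a child $N_i$ (the "knot node"), and attached to $N_i$ are $\lambda$ chains, each a path of $i\cdot j$ nodes hanging from $N_i$; the last (bottom) node of each chain is a leaf. Each supernode carries $s$ labels and every other node carries exactly one label. The labels are the consecutive positive integers $1,2,3,\dots$, assigned in the following order: initial leaf, $S_0$, $N_0$; then for $i=1,2,3,\dots$: $S_i$ (its $s$ labels), $N_i$, then the nodes of the first chain of $N_i$ from top to bottom, then the second chain, ..., then the $\lambda$-th chain. The initial leaf has weight $1$; every other leaf of $\mathcal K$ (namely $N_0$ and the bottom node of each chain) has weight $j$. The leaf weight sequence $w(n)=w_{j,s,\lambda}(n)$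 ($n\ge1$) is the total weight of the leaves of $\mathcal K$ whose label is $\le n$. Explicitly, $w(n)=1+j\cdot\#\{\ell\in L:\ell\le n\}$, where $L$ consists of the number $s+2$ together with the numbers $L_{i,c}=s+2+\sum_{l=1}^{i-1}(s+1+\lambda l j)+s+1+c\,i\,j$ for $i\ge1$, $1\le c\le\lambda$. The sequence $g_{j,s,\lambda}$ is defined by $g_{j,s,\lambda}(n)=w_{j,s,\lambda}(n)$ for $1\le n\le 3+2s+\lambda j$ and $g_{j,s,\lambda}(n)=g_{j,s,\lambda}(n-s-g_{j,s,\lambda}(n-j))+\lambda j$ for $n>3+2s+\lambda j$ (this is well defined). In the case $\lambda=1$, $L=\{p_m: m\ge0\}$ with $p_m=1+\sum_{i=0}^{m}(s+ij+1)$. *)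

theory Defs
  imports Main
begin

definition Lval :: "nat \<Rightarrow> nat \<Rightarrow> nat \<Rightarrow> nat \<Rightarrow> nat \<Rightarrow> nat" where
  "Lval j s lam i c = s + 2 + (\<Sum>l=1..<i. s + 1 + lam * l * j) + s + 1 + c * i * j"

definition Lset :: "nat \<Rightarrow> nat \<Rightarrow> nat \<Rightarrow> nat set" where
  "Lset j s lam = {s + 2} \<union> {Lval j s lam i c | i c. 1 \<le> i \<and> 1 \<le> c \<and> c \<le> lam}"

definition wseq :: "nat \<Rightarrow> nat \<Rightarrow> nat \<Rightarrow> nat \<Rightarrow> nat" where
  "wseq j s lam n = 1 + j * card {l \<in> Lset j s lam. l \<le> n}"

text \<open>Since the recurrence is well defined (all referenced indices lie in 1..n-1),
  this determines g uniquely on n >= 1.\<close>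
definition is_g :: "nat \<Rightarrow> nat \<Rightarrow> nat \<Rightarrow> (nat \<Rightarrow> nat) \<Rightarrow> bool" where
  "is_g j s lam g \<longleftrightarrow>
     (\<forall>n. 1 \<le> n \<and> n \<le> 3 + 2*s + lam*j \<longrightarrow> g n = wseq j s lam n) \<and>
     (\<forall>n. n > 3 + 2*s + lam*j \<longrightarrow> g n = g (n - s - g (n - j)) + lam * j)"

end

theory Submission
  imports Defs
begin

fun pp :: "nat \<Rightarrow> nat \<Rightarrow> nat \<Rightarrow> nat" where
  "pp j s 0 = s + 2"
| "pp j s (Suc m) = pp j s m + s + 1 + Suc m * j"

lemma pp_smono: "strict_mono (pp j s)"
  by (rule strict_mono_Suc_iff[THEN iffD2]) auto

lemma pp_ge: "m \<le> pp j s m"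
  by (induction m) auto

lemma pp_sum: "s + 2 + (\<Sum>l=1..<Suc i. s + 1 + 1 * l * j) = pp j s i"
proof (induction i)
  case 0 then show ?case by simp
next
  case (Suc i)
  have "(\<Sum>l=1..<Suc (Suc i). s + 1 + 1 * l * j) = (\<Sum>l=1..<Suc i. s + 1 + 1 * l * j) + (s + 1 + Suc i * j)"
    using sum.atLeastLessThan_Suc[of 1 "Suc i" "\<lambda>l. s+1+1*l*j"] by (simp del: sum.op_ivl_Suc)
  then show ?case using Suc by (simp del: sum.op_ivl_Suc)
qed

lemma Lval_pp: "1 \<le> i \<Longrightarrow> Lval j s 1 i 1 = pp j s i"
proof -
  assume "1 \<le> i"
  then have "(\<Sum>l=1..<Suc i. s + 1 + 1 * l * j) = (\<Sum>l=1..<i. s + 1 + 1 * l * j) + (s + 1 + 1 * i * j)"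
    using sum.atLeastLessThan_Suc[of 1 i "\<lambda>l. s+1+1*l*j"] by (simp del: sum.op_ivl_Suc)
  then show ?thesis using pp_sum[where s=s and i=i and j=j] unfolding Lval_def by (simp del: sum.op_ivl_Suc)
qed

lemma Lset_pp: "Lset j s 1 = range (pp j s)"
proof
  show "Lset j s 1 \<subseteq> range (pp j s)"
  proof
    fix x assume "x \<in> Lset j s 1"
    then consider "x = s + 2" | i where "1 \<le> i" "x = Lval j s 1 i 1"
      unfolding Lset_def by (auto simp: le_antisym)
    then show "x \<in> range (pp j s)"
    proof cases
      case 1 then show ?thesis by (metis pp.simps(1) rangeI)
    next
      case 2 then show ?thesis using Lval_pp by auto
    qed
  qed
next
  show "range (pp j s) \<subseteq> Lset j s 1"
  proof
    fix x assume "x \<in> range (pp j s)"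
    then obtain m where m: "x = pp j s m" by auto
    show "x \<in> Lset j s 1"
    proof (cases m)
      case 0 then show ?thesis using m unfolding Lset_def by simp
    next
      case (Suc i)
      then have "x = Lval j s 1 m 1" using m Lval_pp by simp
      moreover have "Lval j s 1 m 1 \<in> {Lval j s 1 i c |i c. 1 \<le> i \<and> 1 \<le> c \<and> c \<le> 1}"
        using Suc by force
      ultimately show ?thesis unfolding Lset_def by simp
    qed
  qed
qed

lemma w_card: "wseq j s 1 n = 1 + j * card {m. pp j s m \<le> n}"
proof -
  have "{l \<in> Lset j s 1. l \<le> n} = pp j s ` {m. pp j s m \<le> n}"
    unfolding Lset_pp by auto
  moreover have "inj (pp j s)" using pp_smono strict_mono_imp_inj_on by blast
  ultimately show ?thesis unfolding wseq_def
    by (simp add: card_image inj_on_subset)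
qed

lemma w_block0: "n < pp j s 0 \<Longrightarrow> wseq j s 1 n = 1"
proof -
  assume a: "n < pp j s 0"
  have "{m. pp j s m \<le> n} = {}"
  proof -
    have "pp j s 0 \<le> pp j s m" for m using pp_smono strict_mono_less_eq by blast
    then show ?thesis using a by (auto simp: not_le) (meson le_trans not_le)
  qed
  then show ?thesis unfolding w_card by simp
qed

lemma w_block: "pp j s k \<le> n \<Longrightarrow> n < pp j s (Suc k) \<Longrightarrow> wseq j s 1 n = 1 + Suc k * j"
proof -
  assume a: "pp j s k \<le> n" "n < pp j s (Suc k)"
  have "{m. pp j s m \<le> n} = {..k}"
  proof (rule set_eqI, rule iffI)
    fix m assume "m \<in> {m. pp j s m \<le> n}"
    then have "pp j s m < pp j s (Suc k)" using a by simp
    then have "m < Suc k" using pp_smono strict_mono_less by blast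
    then show "m \<in> {..k}" by simp
  next
    fix m assume "m \<in> {..k}"
    then have "pp j s m \<le> pp j s k" using pp_smono by (simp add: strict_mono_less_eq)
    then show "m \<in> {m. pp j s m \<le> n}" using a by simp
  qed
  then show ?thesis unfolding w_card by simp
qed

lemma blocks: "n < pp j s 0 \<or> (\<exists>k. pp j s k \<le> n \<and> n < pp j s (Suc k))"
proof -
  have ex: "\<exists>m. n < pp j s m" using pp_ge[of "Suc n" j s] by (intro exI[of _ "Suc n"]) simp
  define m where "m = (LEAST m. n < pp j s m)"
  have m1: "n < pp j s m" unfolding m_def using ex by (rule LeastI_ex)
  show ?thesis
  proof (cases m)
    case 0 then show ?thesis using m1 by simp
  next
    case (Suc k)
    then have "\<not> n < pp j s k" unfolding m_def using not_less_Least[of k "\<lambda>m. n < pp j s m"]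
      by (metis lessI m_def)
    then show ?thesis using m1 Suc by (auto simp: not_less)
  qed
qed

lemma g_eq_w:
  assumes j: "j \<ge> 1" and g: "is_g j s 1 g"
  shows "n \<ge> 1 \<Longrightarrow> g n = wseq j s 1 n"
proof (induction n rule: less_induct)
  case (less n)
  show ?case
  proof (cases "n \<le> 3 + 2*s + 1*j")
    case True then show ?thesis using g less.prems unfolding is_g_def by blast
  next
    case False
    then have rec: "g n = g (n - s - g (n - j)) + 1 * j" using g unfolding is_g_def by auto
    have p1: "pp j s 1 = 3 + 2*s + j" by simp
    from blocks[of n j s] False obtain k where k: "pp j s k \<le> n" "n < pp j s (Suc k)"
      by auto
    have "k \<noteq> 0" using k False by (metis le_antisym not_le p1 Suc_eq_plus1 One_nat_def nat_mult_1 pp.simps(1) pp.simps(2) zero_less_one k(2) Nat.add_0_right less_imp_le_nat le0 less_le_not_le)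
    then obtain k' where k': "k = Suc k'" using not0_implies_Suc by blast
    have pk: "pp j s k = pp j s k' + s + 1 + k * j" using k' by simp
    have pSk: "pp j s (Suc k) = pp j s k + s + 1 + Suc k * j" by simp
    have pk'1: "pp j s k' \<ge> 1" using pp_smono strict_mono_less_eq[of "pp j s" 0 k'] by simp
    have wn: "wseq j s 1 n = 1 + Suc k * j" using w_block k by blast
    have "k * j \<ge> j" using k' by simp
    then have "n - j < n" "1 \<le> n - j" using j k pk pk'1 by linarith+
    then have gnj: "g (n - j) = wseq j s 1 (n - j)"
      using less.IH[of "n - j"] by simp
    show ?thesis
    proof (cases "pp j s k \<le> n - j")
      case True
      have "n - j < pp j s (Suc k)" using k by simp
      then have wnj: "wseq j s 1 (n - j) = 1 + Suc k * j" using w_block True by blast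
      define m where "m = n - s - (1 + Suc k * j)"
      have m1: "pp j s k' \<le> m" "m < pp j s k"
        using True k pk pSk j unfolding m_def by (simp_all add: k')
      have gm: "g m = wseq j s 1 m" using less.IH[of m] m1 pk'1 pk unfolding m_def by auto
      have "wseq j s 1 m = 1 + k * j" using w_block[of j s k' m] m1 k' by simp
      then show ?thesis using rec gnj wnj gm wn unfolding m_def by simp
    next
      case False
      have "pp j s k' \<le> n - j" using k pk \<open>k * j \<ge> j\<close> by linarith
      moreover have "n - j < pp j s k" using False by simp
      ultimately have wnj: "wseq j s 1 (n - j) = 1 + k * j" using w_block[of j s k' "n - j"] k' by simp
      define m where "m = n - s - (1 + k * j)"
      have m1: "pp j s k' \<le> m" "m < pp j s k"
        using False k pk pSk j unfolding m_def by (simp_all add: k')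
      have gm: "g m = wseq j s 1 m" using less.IH[of m] m1 pk'1 pk unfolding m_def by auto
      have "wseq j s 1 m = 1 + k * j" using w_block[of j s k' m] m1 k' by simp
      then show ?thesis using rec gnj wnj gm wn unfolding m_def by simp
    qed
  qed
qed


lemma w_mono: "m \<le> n \<Longrightarrow> wseq j s 1 m \<le> wseq j s 1 n"
proof -
  assume "m \<le> n"
  have f: "finite {x. pp j s x \<le> n}"
    by (rule finite_subset[of _ "{..n}"]) (auto intro: le_trans[OF pp_ge])
  have "{x. pp j s x \<le> m} \<subseteq> {x. pp j s x \<le> n}" using \<open>m \<le> n\<close> by auto
  then have "card {x. pp j s x \<le> m} \<le> card {x. pp j s x \<le> n}" using f card_mono by blast
  then show ?thesis unfolding w_card by simp
qed

lemma w_val: "(n < pp j s 0 \<and> wseq j s 1 n = 1) \<or>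
  (\<exists>k. pp j s k \<le> n \<and> n < pp j s (Suc k) \<and> wseq j s 1 n = 1 + Suc k * j)"
  using blocks[of n j s] w_block0 w_block by blast

lemma level_set:
  assumes j: "j \<ge> 1"
  shows "{n. n \<ge> 1 \<and> wseq j s 1 n = 1 + c * j} =
     (case c of 0 \<Rightarrow> {1..<pp j s 0} | Suc k \<Rightarrow> {pp j s k..<pp j s (Suc k)})"
proof (cases c)
  case 0
  show ?thesis
  proof (rule set_eqI, rule iffI)
    fix n assume "n \<in> {n. n \<ge> 1 \<and> wseq j s 1 n = 1 + c * j}"
    then show "n \<in> (case c of 0 \<Rightarrow> {1..<pp j s 0} | Suc k \<Rightarrow> {pp j s k..<pp j s (Suc k)})"
      using w_val[of n j s] 0 j by auto
  next
    fix n assume "n \<in> (case c of 0 \<Rightarrow> {1..<pp j s 0} | Suc k \<Rightarrow> {pp j s k..<pp j s (Suc k)})"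
    then show "n \<in> {n. n \<ge> 1 \<and> wseq j s 1 n = 1 + c * j}"
      using w_block0[of n j s] 0 by auto
  qed
next
  case (Suc k)
  show ?thesis
  proof (rule set_eqI, rule iffI)
    fix n assume a: "n \<in> {n. n \<ge> 1 \<and> wseq j s 1 n = 1 + c * j}"
    from w_val[of n j s] show "n \<in> (case c of 0 \<Rightarrow> {1..<pp j s 0} | Suc k \<Rightarrow> {pp j s k..<pp j s (Suc k)})"
    proof
      assume "n < pp j s 0 \<and> wseq j s 1 n = 1" then show ?thesis using a Suc j by auto
    next
      assume "\<exists>k. pp j s k \<le> n \<and> n < pp j s (Suc k) \<and> wseq j s 1 n = 1 + Suc k * j"
      then obtain k2 where k2: "pp j s k2 \<le> n" "n < pp j s (Suc k2)" "wseq j s 1 n = 1 + Suc k2 * j" by blast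
      then have "Suc k2 * j = Suc k * j" using a Suc by simp
      then have "k2 = k" using j by simp
      then show ?thesis using k2 Suc by simp
    qed
  next
    fix n assume "n \<in> (case c of 0 \<Rightarrow> {1..<pp j s 0} | Suc k \<Rightarrow> {pp j s k..<pp j s (Suc k)})"
    then have n: "pp j s k \<le> n" "n < pp j s (Suc k)" using Suc by auto
    have "1 \<le> pp j s k" using pp_smono strict_mono_less_eq[of "pp j s" 0 k] by simp
    then show "n \<in> {n. n \<ge> 1 \<and> wseq j s 1 n = 1 + c * j}"
      using w_block[OF n] n Suc by auto
  qed
qed

theorem theorem4p1:
  fixes j s :: nat and g :: "nat \<Rightarrow> nat"
  assumes "j \<ge> 1"
    and "is_g j s 1 g"
  shows "(\<forall>m n. 1 \<le> m \<and> m \<le> n \<longrightarrow> g m \<le> g n)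
       \<and> (\<forall>n\<ge>1. g n mod j = 1 mod j)
       \<and> (\<forall>q\<ge>1. finite {n. n \<ge> 1 \<and> g n = q} \<and>
             card {n. n \<ge> 1 \<and> g n = q} = (if q mod j = 1 mod j then q + s else 0))"
proof -
  have gw: "\<And>n. n \<ge> 1 \<Longrightarrow> g n = wseq j s 1 n" using g_eq_w[OF assms] by blast
  have A: "\<forall>m n. 1 \<le> m \<and> m \<le> n \<longrightarrow> g m \<le> g n" using gw w_mono by auto
  have wmod: "wseq j s 1 n mod j = 1 mod j" for n unfolding wseq_def by (rule mod_mult_self2)
  have B: "\<forall>n\<ge>1. g n mod j = 1 mod j" using gw wmod by simp
  have eqset: "{n. n \<ge> 1 \<and> g n = q} = {n. n \<ge> 1 \<and> wseq j s 1 n = q}" for q using gw by auto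
  have C: "finite {n. n \<ge> 1 \<and> g n = q} \<and>
             card {n. n \<ge> 1 \<and> g n = q} = (if q mod j = 1 mod j then q + s else 0)" if q: "q \<ge> 1" for q
  proof (cases "q mod j = 1 mod j")
    case False
    have E: "{n. n \<ge> 1 \<and> g n = q} = {}" using False wmod gw by auto
    show ?thesis unfolding E using False by simp
  next
    case True
    have "j dvd (q - 1)"
    proof (cases "j = 1")
      case False
      then have "1 mod j = 1" using assms(1) by simp
      then have "q mod j = 1" using True by simp
      then show ?thesis using q by (metis dvd_minus_mod minus_mod_eq_mult_div)
    qed simp
    then obtain c where c: "q - 1 = j * c" by blast
    then have qc: "q = 1 + c * j" using q by (simp add: mult.commute)
    have S: "{n. n \<ge> 1 \<and> g n = q} =
       (case c of 0 \<Rightarrow> {1..<pp j s 0} | Suc k \<Rightarrow> {pp j s k..<pp j s (Suc k)})"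
      using eqset level_set[OF assms(1), of s c] qc by simp
    show ?thesis
    proof (cases c)
      case 0 then show ?thesis using S True qc by simp
    next
      case (Suc k)
      then show ?thesis using S True qc by simp
    qed
  qed
  show ?thesis using A B C by blast
qed

end
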